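(* Fix $\beta\in(0,1)$. Let $\{Z_k\}_{k\ge1}$ be i.i.d. $\mathrm{Bernoulli}(1/2)$, sampled once. Let $p(k)=c\,k^{-1/\beta}$ ($k\ge1$) with $c$ the normalizing constant. Let $X_n=((k_1,Z_{k_1}),\dots,(k_n,Z_{k_n}))$ and $Y_m=((k'_1,Z_{k'_1}),\dots,(k'_m,Z_{k'_m}))$, where $k_1,\dots,k_n,k'_1,\dots,k'_m$ are i.i.d. with law $p$, independent of the $Z$'s (both sequences use the same $Z$'s). Let $C_\beta>0$ be the constant such that $U(n)=\sum_{k\ge1}[1-(1-p(k))^n]\sim C_\beta n^\beta$ as $n\to\infty$. Then, to leading asymptotic order, $$I(X_n;Y_m)=C_\beta\left[n^\beta+m^\beta-(n+m)^\beta\right],$$ i.e. the process has generalized Hilberg (GHC) scaling $I(X_n;Y_m)\propto n^\beta+m^\beta-(n+m)^\beta$.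
   Context: $I(X;Y)=H(X)+H(Y)-H(X,Y)$ is Shannon mutual information with entropies in bits. $U(n)$ is the expected number of distinct indices among $n$ independent draws from $p$. *)

theory Defs
  imports "HOL-Probability.Probability"
begin

definition zipf_const :: "real \<Rightarrow> real" where
  "zipf_const \<beta> = 1 / (\<Sum>k. real (Suc k) powr (- 1 / \<beta>))"

definition zipf_p :: "real \<Rightarrow> nat \<Rightarrow> real" where
  "zipf_p \<beta> k = (if k \<ge> 1 then zipf_const \<beta> * real k powr (- 1 / \<beta>) else 0)"

definition zipf_pmf :: "real \<Rightarrow> nat pmf" where
  "zipf_pmf \<beta> = embed_pmf (zipf_p \<beta>)"

text \<open>Expected number of distinct indices among n i.i.d. draws from p.\<close>
definition U :: "real \<Rightarrow> nat \<Rightarrow> real" where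
  "U \<beta> n = (\<Sum>k. 1 - (1 - zipf_p \<beta> (Suc k)) ^ n)"

text \<open>Joint law of (X_n, Y_m): indices k_1..k_n,k'_1..k'_m i.i.d. p, and fair coins Z_k
  (shared by X and Y, independent of the indices); only the coins at drawn indices matter,
  so we sample the coin sequence restricted to the drawn index set.\<close>
definition XY_pmf :: "real \<Rightarrow> nat \<Rightarrow> nat \<Rightarrow> ((nat \<times> bool) list \<times> (nat \<times> bool) list) pmf" where
  "XY_pmf \<beta> n m = do {
     ks \<leftarrow> replicate_pmf (n + m) (zipf_pmf \<beta>);
     z \<leftarrow> Pi_pmf (set ks) False (\<lambda>_. bernoulli_pmf (1/2));
     return_pmf (map (\<lambda>k. (k, z k)) (take n ks), map (\<lambda>k. (k, z k)) (drop n ks)) }"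

definition shannon_entropy :: "'a pmf \<Rightarrow> real" where
  "shannon_entropy q = (\<Sum>\<^sub>\<infinity>x. - pmf q x * log 2 (pmf q x))"

definition mutual_info :: "('a \<times> 'b) pmf \<Rightarrow> real" where
  "mutual_info q = shannon_entropy (map_pmf fst q) + shannon_entropy (map_pmf snd q)
                   - shannon_entropy q"

end

theory Submission
  imports Defs "HOL-Real_Asymp.Real_Asymp"
begin


definition hh :: "real \<Rightarrow> real" where "hh x = - x * log 2 x"

definition HS :: "'a pmf \<Rightarrow> real \<Rightarrow> bool" where
  "HS q s \<longleftrightarrow> ((\<lambda>x. hh (pmf q x)) has_sum s) UNIV"

lemma hh_0[simp]: "hh 0 = 0" by (simp add: hh_def)

lemma hh_nonneg: "0 \<le> x \<Longrightarrow> x \<le> 1 \<Longrightarrow> 0 \<le> hh x"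
  unfolding hh_def
  by (cases "x = 0") (auto intro!: mult_nonneg_nonpos simp: log_le_zero_cancel_iff)

lemma hh_mult: "0 \<le> x \<Longrightarrow> 0 \<le> y \<Longrightarrow> hh (x * y) = x * hh y + y * hh x"
  unfolding hh_def
  by (cases "x = 0"; cases "y = 0") (auto simp: log_mult algebra_simps)

lemma HS_entropy: "HS q s \<Longrightarrow> shannon_entropy q = s"
  unfolding HS_def shannon_entropy_def hh_def by (simp add: infsumI)

lemma pmf_has_sum: "(pmf p has_sum 1) UNIV"
proof -
  have s: "pmf p summable_on UNIV"
    using pmf_abs_summable[of p UNIV] abs_summable_equivalent summable_on_iff_abs_summable_on_real by blast
  have "infsum (pmf p) UNIV = 1"
    using infsetsum_infsum[OF pmf_abs_summable, of p UNIV] infsetsum_pmf_eq_1[of p UNIV] by simp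
  thus ?thesis using s has_sum_infsum by metis
qed

lemma HS_map_inj:
  assumes inj: "inj_on f (set_pmf q)"
  shows "HS (map_pmf f q) s \<longleftrightarrow> HS q s"
proof -
  let ?g = "\<lambda>y. hh (pmf (map_pmf f q) y)"
  have "(?g has_sum s) UNIV \<longleftrightarrow> (?g has_sum s) (f ` set_pmf q)"
    by (intro has_sum_cong_neutral) (auto simp: pmf_map_outside)
  also have "\<dots> \<longleftrightarrow> ((?g \<circ> f) has_sum s) (set_pmf q)"
    by (rule has_sum_reindex[OF inj])
  also have "\<dots> \<longleftrightarrow> ((\<lambda>x. hh (pmf q x)) has_sum s) (set_pmf q)"
    by (intro has_sum_cong) (simp add: pmf_map_inj[OF inj])
  also have "\<dots> \<longleftrightarrow> ((\<lambda>x. hh (pmf q x)) has_sum s) UNIV"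
    by (intro has_sum_cong_neutral) (auto simp: set_pmf_eq)
  finally show ?thesis unfolding HS_def .
qed

lemma HS_pmf_of_set:
  assumes "finite S" "S \<noteq> {}"
  shows "HS (pmf_of_set S) (log 2 (card S))"
proof -
  have c: "card S > 0" using assms by (simp add: card_gt_0_iff)
  have "((\<lambda>x. hh (pmf (pmf_of_set S) x)) has_sum (\<Sum>x\<in>S. hh (1 / card S))) S"
    using assms by (intro has_sum_finiteI) auto
  hence "((\<lambda>x. hh (pmf (pmf_of_set S) x)) has_sum (\<Sum>x\<in>S. hh (1 / card S))) UNIV"
    by (subst has_sum_cong_neutral[where T=S]) (auto simp: assms)
  moreover have "(\<Sum>x\<in>S. hh (1 / card S)) = log 2 (card S)"
    using c by (simp add: hh_def log_divide)
  ultimately show ?thesis unfolding HS_def by simp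
qed

lemma pmf_bind_Pair:
  "pmf (bind_pmf D (\<lambda>a. map_pmf (Pair a) (W a))) (a, b) = pmf D a * pmf (W a) b"
proof -
  have "pmf (bind_pmf D (\<lambda>a. map_pmf (Pair a) (W a))) (a, b) =
        (\<integral>x. pmf (map_pmf (Pair x) (W x)) (a, b) \<partial>measure_pmf D)"
    by (rule pmf_bind)
  also have "\<dots> = (\<integral>x. indicator {a} x * pmf (W a) b \<partial>measure_pmf D)"
  proof (intro Bochner_Integration.integral_cong refl)
    fix x show "pmf (map_pmf (Pair x) (W x)) (a, b) = indicator {a} x * pmf (W a) b"
    proof (cases "x = a")
      case True thus ?thesis by (simp add: pmf_map_inj' inj_on_def)
    next
      case False
      hence "(a, b) \<notin> set_pmf (map_pmf (Pair x) (W x))" by auto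
      thus ?thesis using False by (simp add: pmf_eq_0_set_pmf)
    qed
  qed
  also have "\<dots> = pmf D a * pmf (W a) b"
    by (simp add: measure_pmf_single)
  finally show ?thesis .
qed

lemma HS_chain:
  assumes D: "HS D hD"
    and W: "\<And>a. HS (W a) (G a)"
    and E: "((\<lambda>a. pmf D a * G a) has_sum e) UNIV"
  shows "HS (bind_pmf D (\<lambda>a. map_pmf (Pair a) (W a))) (hD + e)"
proof -
  define f where "f = (\<lambda>(a,b). pmf D a * hh (pmf (W a) b) + pmf (W a) b * hh (pmf D a))"
  have fib: "((\<lambda>b. f (a, b)) has_sum (pmf D a * G a + hh (pmf D a))) UNIV" for a
  proof -
    have "((\<lambda>b. pmf D a * hh (pmf (W a) b)) has_sum (pmf D a * G a)) UNIV"
      using W[of a] unfolding HS_def by (rule has_sum_cmult_right)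
    moreover have "((\<lambda>b. pmf (W a) b * hh (pmf D a)) has_sum (1 * hh (pmf D a))) UNIV"
      using pmf_has_sum[of "W a"] by (rule has_sum_cmult_left)
    ultimately show ?thesis unfolding f_def by (simp add: has_sum_add)
  qed
  have tot: "((\<lambda>a. pmf D a * G a + hh (pmf D a)) has_sum (e + hD)) UNIV"
    using E D unfolding HS_def by (rule has_sum_add)
  have nn: "f (a, b) \<ge> 0" for a b
    unfolding f_def
    by (simp, intro add_nonneg_nonneg mult_nonneg_nonneg pmf_nonneg hh_nonneg pmf_le_1)
  have "f summable_on Sigma UNIV (\<lambda>_. UNIV)"
    by (rule summable_on_SigmaI[OF fib has_sum_imp_summable[OF tot]]) (use nn in auto)
  hence "(f has_sum (e + hD)) (Sigma UNIV (\<lambda>_. UNIV))"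
    by (intro has_sum_SigmaI[OF fib tot])
  hence "(f has_sum (hD + e)) UNIV" by (simp add: add.commute)
  moreover have "f x = hh (pmf (bind_pmf D (\<lambda>a. map_pmf (Pair a) (W a))) x)" for x
    by (cases x) (simp add: f_def pmf_bind_Pair hh_mult)
  ultimately show ?thesis unfolding HS_def by (metis (no_types, lifting) has_sum_cong)
qed

lemma HS_pair:
  assumes "HS A a" "HS B b" shows "HS (pair_pmf A B) (a + b)"
proof -
  have "pair_pmf A B = bind_pmf A (\<lambda>x. map_pmf (Pair x) B)"
    by (simp add: pair_pmf_def map_pmf_def)
  moreover have "((\<lambda>x. pmf A x * b) has_sum (1 * b)) UNIV"
    by (rule has_sum_cmult_left[OF pmf_has_sum])
  ultimately show ?thesis using HS_chain[of A a "\<lambda>_. B" "\<lambda>_. b" b] assms by simp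
qed


definition WW :: "nat list \<Rightarrow> (nat \<Rightarrow> bool) pmf" where
  "WW ks = Pi_pmf (set ks) False (\<lambda>_. bernoulli_pmf (1/2))"

definition enc :: "nat list \<Rightarrow> (nat \<Rightarrow> bool) \<Rightarrow> (nat \<times> bool) list" where
  "enc ks z = map (\<lambda>k. (k, z k)) ks"

definition Dec :: "nat list pmf \<Rightarrow> (nat \<times> bool) list pmf" where
  "Dec D = bind_pmf D (\<lambda>ks. map_pmf (enc ks) (WW ks))"

lemma WW_uniform: "WW ks = pmf_of_set (PiE_dflt (set ks) False (\<lambda>_. UNIV))"
proof -
  have "bernoulli_pmf (1/2) = pmf_of_set (UNIV :: bool set)"
    by (rule pmf_eqI) (simp add: UNIV_bool)
  hence "WW ks = Pi_pmf (set ks) False (\<lambda>_. pmf_of_set UNIV)" by (simp add: WW_def)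
  also have "\<dots> = pmf_of_set (PiE_dflt (set ks) False (\<lambda>_. UNIV))"
    by (rule Pi_pmf_of_set) auto
  finally show ?thesis .
qed

lemma HS_WW: "HS (WW ks) (card (set ks))"
proof -
  have c: "card (PiE_dflt (set ks) False (\<lambda>_. UNIV :: bool set)) = 2 ^ card (set ks)"
    by (subst card_PiE_dflt) (auto simp: card_UNIV_bool)
  have "PiE_dflt (set ks) False (\<lambda>_. UNIV :: bool set) \<noteq> {}" by simp
  moreover have "finite (PiE_dflt (set ks) False (\<lambda>_. UNIV :: bool set))"
    by (intro finite_PiE_dflt) auto
  ultimately have "HS (WW ks) (log 2 (card (PiE_dflt (set ks) False (\<lambda>_. UNIV :: bool set))))"
    unfolding WW_uniform by (intro HS_pmf_of_set)
  thus ?thesis unfolding c by (simp add: log_nat_power)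
qed

lemma set_WW: "z \<in> set_pmf (WW ks) \<Longrightarrow> x \<notin> set ks \<Longrightarrow> z x = False"
  unfolding WW_def using set_Pi_pmf_subset[of "set ks" False] by blast

lemma HS_Dec:
  assumes "HS D hD" "((\<lambda>ks. pmf D ks * real (card (set ks))) has_sum e) UNIV"
  shows "HS (Dec D) (hD + e)"
proof -
  let ?J = "bind_pmf D (\<lambda>ks. map_pmf (Pair ks) (WW ks))"
  have eq: "Dec D = map_pmf (\<lambda>(ks, z). enc ks z) ?J"
    unfolding Dec_def map_bind_pmf map_pmf_comp by simp
  have inj: "inj_on (\<lambda>(ks, z). enc ks z) (set_pmf ?J)"
  proof (rule inj_onI, clarify)
    fix ks z ks' z'
    assume a: "(ks, z) \<in> set_pmf ?J" "(ks', z') \<in> set_pmf ?J" and e: "enc ks z = enc ks' z'"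
    have z: "z \<in> set_pmf (WW ks)" and z': "z' \<in> set_pmf (WW ks')" using a by auto
    have k: "ks = ks'" using arg_cong[OF e, of "map fst"] by (simp add: enc_def comp_def)
    have "z x = z' x" for x
    proof (cases "x \<in> set ks")
      case True
      then obtain i where i: "i < length ks" "ks ! i = x" by (auto simp: in_set_conv_nth)
      have "enc ks z ! i = enc ks' z' ! i" using e by simp
      thus ?thesis using i k by (simp add: enc_def)
    next
      case False thus ?thesis using set_WW[OF z] set_WW[OF z'] k by simp
    qed
    thus "ks = ks' \<and> z = z'" using k by auto
  qed
  have "HS ?J (hD + e)" using HS_chain[of D hD WW "\<lambda>ks. real (card (set ks))" e] assms HS_WW by simp
  thus ?thesis unfolding eq using HS_map_inj[OF inj] by simp
qed

lemma take_drop_inj: "inj (\<lambda>l. (take n l, drop n l))"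
  by (rule injI) (metis append_take_drop_id prod.inject)

lemma XY_eq: "XY_pmf \<beta> n m = map_pmf (\<lambda>l. (take n l, drop n l)) (Dec (replicate_pmf (n + m) (zipf_pmf \<beta>)))"
  unfolding XY_pmf_def Dec_def map_bind_pmf map_pmf_comp
  by (simp add: map_pmf_def enc_def take_map drop_map WW_def)

lemma map_take_rep: "map_pmf (take n) (replicate_pmf (n + m) p) = replicate_pmf n p"
proof -
  have "map_pmf (take n) (replicate_pmf (n + m) p) =
     bind_pmf (replicate_pmf n p) (\<lambda>xs. bind_pmf (replicate_pmf m p) (\<lambda>ys. return_pmf (take n (xs @ ys))))"
    by (simp add: replicate_pmf_distrib map_bind_pmf)
  also have "\<dots> = bind_pmf (replicate_pmf n p) (\<lambda>xs. bind_pmf (replicate_pmf m p) (\<lambda>ys. return_pmf xs))"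
    by (intro bind_pmf_cong refl) (auto simp: set_replicate_pmf)
  also have "\<dots> = replicate_pmf n p" by (simp add: bind_return_pmf')
  finally show ?thesis .
qed

lemma map_drop_rep: "map_pmf (drop n) (replicate_pmf (n + m) p) = replicate_pmf m p"
proof -
  have "map_pmf (drop n) (replicate_pmf (n + m) p) =
     bind_pmf (replicate_pmf n p) (\<lambda>xs. bind_pmf (replicate_pmf m p) (\<lambda>ys. return_pmf (drop n (xs @ ys))))"
    by (simp add: replicate_pmf_distrib map_bind_pmf)
  also have "\<dots> = bind_pmf (replicate_pmf n p) (\<lambda>xs. bind_pmf (replicate_pmf m p) (\<lambda>ys. return_pmf ys))"
    by (intro bind_pmf_cong refl) (auto simp: set_replicate_pmf)
  also have "\<dots> = replicate_pmf m p" by (simp add: bind_return_pmf')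
  finally show ?thesis .
qed

lemma enc_restrict:
  assumes "set ks' \<subseteq> set ks"
  shows "map_pmf (enc ks') (WW ks) = map_pmf (enc ks') (WW ks')"
proof -
  have "WW ks' = map_pmf (\<lambda>f x. if x \<in> set ks' then f x else False) (WW ks)"
    unfolding WW_def by (rule Pi_pmf_subset) (use assms in auto)
  hence "map_pmf (enc ks') (WW ks') = map_pmf (\<lambda>z. enc ks' (\<lambda>x. if x \<in> set ks' then z x else False)) (WW ks)"
    by (simp add: map_pmf_comp)
  also have "\<dots> = map_pmf (enc ks') (WW ks)"
    by (intro map_pmf_cong refl) (auto simp: enc_def)
  finally show ?thesis by simp
qed

lemma XY_fst: "map_pmf fst (XY_pmf \<beta> n m) = Dec (replicate_pmf n (zipf_pmf \<beta>))"
proof -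
  let ?R = "replicate_pmf (n + m) (zipf_pmf \<beta>)"
  have "map_pmf fst (XY_pmf \<beta> n m) = bind_pmf ?R (\<lambda>ks. map_pmf (\<lambda>z. take n (enc ks z)) (WW ks))"
    unfolding XY_eq Dec_def map_bind_pmf map_pmf_comp by simp
  also have "\<dots> = bind_pmf ?R (\<lambda>ks. map_pmf (enc (take n ks)) (WW (take n ks)))"
  proof (intro bind_pmf_cong refl)
    fix ks
    have "map_pmf (\<lambda>z. take n (enc ks z)) (WW ks) = map_pmf (enc (take n ks)) (WW ks)"
      by (rule map_pmf_cong) (simp_all add: enc_def take_map)
    also have "\<dots> = map_pmf (enc (take n ks)) (WW (take n ks))"
      by (rule enc_restrict) (rule set_take_subset)
    finally show "map_pmf (\<lambda>z. take n (enc ks z)) (WW ks) = map_pmf (enc (take n ks)) (WW (take n ks))" .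
  qed
  also have "\<dots> = bind_pmf (map_pmf (take n) ?R) (\<lambda>ks. map_pmf (enc ks) (WW ks))"
    by (simp add: bind_map_pmf)
  also have "\<dots> = Dec (replicate_pmf n (zipf_pmf \<beta>))"
    by (simp add: map_take_rep Dec_def)
  finally show ?thesis .
qed

lemma XY_snd: "map_pmf snd (XY_pmf \<beta> n m) = Dec (replicate_pmf m (zipf_pmf \<beta>))"
proof -
  let ?R = "replicate_pmf (n + m) (zipf_pmf \<beta>)"
  have "map_pmf snd (XY_pmf \<beta> n m) = bind_pmf ?R (\<lambda>ks. map_pmf (\<lambda>z. drop n (enc ks z)) (WW ks))"
    unfolding XY_eq Dec_def map_bind_pmf map_pmf_comp by simp
  also have "\<dots> = bind_pmf ?R (\<lambda>ks. map_pmf (enc (drop n ks)) (WW (drop n ks)))"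
  proof (intro bind_pmf_cong refl)
    fix ks
    have "map_pmf (\<lambda>z. drop n (enc ks z)) (WW ks) = map_pmf (enc (drop n ks)) (WW ks)"
      by (rule map_pmf_cong) (simp_all add: enc_def drop_map)
    also have "\<dots> = map_pmf (enc (drop n ks)) (WW (drop n ks))"
      by (rule enc_restrict) (rule set_drop_subset)
    finally show "map_pmf (\<lambda>z. drop n (enc ks z)) (WW ks) = map_pmf (enc (drop n ks)) (WW (drop n ks))" .
  qed
  also have "\<dots> = bind_pmf (map_pmf (drop n) ?R) (\<lambda>ks. map_pmf (enc ks) (WW ks))"
    by (simp add: bind_map_pmf)
  also have "\<dots> = Dec (replicate_pmf m (zipf_pmf \<beta>))"
    by (simp add: map_drop_rep Dec_def)
  finally show ?thesis .
qed

lemma HS_rep: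
  assumes "HS p h" shows "HS (replicate_pmf n p) (real n * h)"
proof (induction n)
  case 0 thus ?case
    using HS_pmf_of_set[of "{[]::'a list}"] by (simp add: pmf_of_set_singleton)
next
  case (Suc n)
  have "replicate_pmf (Suc n) p = map_pmf (\<lambda>(x, xs). x # xs) (pair_pmf p (replicate_pmf n p))"
    by (simp add: pair_pmf_def map_bind_pmf map_pmf_def bind_assoc_pmf bind_return_pmf)
  moreover have "inj_on (\<lambda>(x, xs). x # xs) S" for S :: "('a \<times> 'a list) set"
    by (auto simp: inj_on_def)
  moreover have "HS (pair_pmf p (replicate_pmf n p)) (h + real n * h)"
    by (rule HS_pair[OF assms Suc])
  ultimately show ?case by (simp add: HS_map_inj algebra_simps)
qed

lemma MI_formula:
  assumes hP: "HS (zipf_pmf \<beta>) hP"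
    and E: "\<And>n. ((\<lambda>ks. pmf (replicate_pmf n (zipf_pmf \<beta>)) ks * real (card (set ks))) has_sum U \<beta> n) UNIV"
  shows "mutual_info (XY_pmf \<beta> n m) = U \<beta> n + U \<beta> m - U \<beta> (n + m)"
proof -
  have d: "\<And>k. HS (Dec (replicate_pmf k (zipf_pmf \<beta>))) (real k * hP + U \<beta> k)"
    by (rule HS_Dec[OF HS_rep[OF hP] E])
  have "HS (XY_pmf \<beta> n m) (real (n + m) * hP + U \<beta> (n + m))"
    unfolding XY_eq using HS_map_inj[OF inj_on_subset[OF take_drop_inj subset_UNIV]] d by blast
  thus ?thesis unfolding mutual_info_def XY_fst XY_snd
    using d[THEN HS_entropy] by (simp add: HS_entropy algebra_simps)
qed


context
  fixes \<beta> :: real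
  assumes b0: "0 < \<beta>" and b1: "\<beta> < 1"
begin

lemma zsum_summable: "summable (\<lambda>k. real (Suc k) powr (- 1 / \<beta>))"
proof -
  have "- 1 / \<beta> < -1" using b0 b1 by (simp add: field_simps)
  hence "summable (\<lambda>k. real k powr (- 1 / \<beta>))" by (simp add: summable_real_powr_iff)
  thus ?thesis by (subst summable_Suc_iff[where f = "\<lambda>k. real k powr (- 1 / \<beta>)"])
qed

lemma zsum_pos: "(\<Sum>k. real (Suc k) powr (- 1 / \<beta>)) > 0"
  by (rule suminf_pos[OF zsum_summable]) simp

lemma zc_pos: "zipf_const \<beta> > 0"
  unfolding zipf_const_def using zsum_pos by simp

lemma zp_nonneg: "zipf_p \<beta> k \<ge> 0"
  unfolding zipf_p_def using zc_pos by auto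

lemma zp_Suc: "zipf_p \<beta> (Suc k) = zipf_const \<beta> * real (Suc k) powr (- 1 / \<beta>)"
  unfolding zipf_p_def by simp

lemma zp_sums: "zipf_p \<beta> sums 1"
proof -
  have "(\<lambda>k. zipf_p \<beta> (Suc k)) sums (zipf_const \<beta> * (\<Sum>k. real (Suc k) powr (- 1 / \<beta>)))"
    unfolding zp_Suc by (intro sums_mult summable_sums zsum_summable)
  hence "(\<lambda>k. zipf_p \<beta> (Suc k)) sums 1"
    using zsum_pos by (simp add: zipf_const_def)
  moreover have "zipf_p \<beta> 0 = 0" by (simp add: zipf_p_def)
  ultimately show ?thesis using sums_Suc_iff[of "zipf_p \<beta>" 1] by simp
qed

lemma zp_summable: "summable (zipf_p \<beta>)"
  using zp_sums sums_summable by blast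

lemma pmf_zipf: "pmf (zipf_pmf \<beta>) k = zipf_p \<beta> k"
proof -
  have "(\<integral>\<^sup>+x. ennreal (zipf_p \<beta> x) \<partial>count_space UNIV) = (\<Sum>x. ennreal (zipf_p \<beta> x))"
    by (rule nn_integral_count_space_nat)
  also have "\<dots> = ennreal (\<Sum>x. zipf_p \<beta> x)"
    by (rule suminf_ennreal2[OF zp_nonneg zp_summable])
  also have "\<dots> = 1" using zp_sums sums_unique by fastforce
  finally show ?thesis unfolding zipf_pmf_def
    by (intro pmf_embed_pmf zp_nonneg)
qed

lemma zp_le1: "zipf_p \<beta> k \<le> 1"
  using pmf_le_1[of "zipf_pmf \<beta>" k] by (simp add: pmf_zipf)

lemma hh_zp_summable: "summable (\<lambda>k. hh (zipf_p \<beta> k))"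
proof -
  define s where "s = 1 / \<beta>"
  define c where "c = zipf_const \<beta>"
  define \<epsilon> where "\<epsilon> = (s - 1) / 2"
  have s1: "s > 1" using b0 b1 by (simp add: s_def field_simps)
  have e0: "\<epsilon> > 0" using s1 by (simp add: \<epsilon>_def)
  have c0: "c > 0" using zc_pos by (simp add: c_def)
  define A where "A = c * \<bar>log 2 c\<bar>"
  define B where "B = c * s / (\<epsilon> * ln 2)"
  define g where "g = (\<lambda>k::nat. A * real k powr (- s) + B * real k powr (\<epsilon> - s))"
  have sg: "summable g"
    unfolding g_def using s1 e0
    by (intro summable_add summable_mult) (auto simp: summable_real_powr_iff \<epsilon>_def field_simps)
  show ?thesis
  proof (rule summable_comparison_test'[OF sg, of 1])
    fix k :: nat assume k: "k \<ge> 1"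
    have kp: "real k \<ge> 1" using k by simp
    have zp: "zipf_p \<beta> k = c * real k powr (- s)"
      using k by (simp add: zipf_p_def c_def s_def)
    have xpos: "c * real k powr (- s) > 0" using c0 kp by simp
    have lg: "log 2 (c * real k powr (- s)) = log 2 c - s * log 2 (real k)"
      using c0 kp by (simp add: log_mult log_powr)
    have hk: "hh (zipf_p \<beta> k) = c * real k powr (- s) * (s * log 2 (real k) - log 2 c)"
      unfolding zp hh_def lg by (simp add: algebra_simps)
    have l1: "log 2 (real k) \<le> real k powr \<epsilon> / (\<epsilon> * ln 2)"
    proof -
      have "ln (real k) \<le> real k powr \<epsilon> / \<epsilon>" by (rule ln_powr_bound[OF kp e0])
      thus ?thesis by (simp add: log_def field_simps)
    qed
    have l0: "log 2 (real k) \<ge> 0" using kp by simp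
    have "hh (zipf_p \<beta> k) \<le> c * real k powr (- s) * (s * (real k powr \<epsilon> / (\<epsilon> * ln 2)) + \<bar>log 2 c\<bar>)"
    proof -
      have "s * log 2 (real k) \<le> s * (real k powr \<epsilon> / (\<epsilon> * ln 2))"
        using s1 l1 by (intro mult_left_mono) auto
      hence "s * log 2 (real k) - log 2 c \<le> s * (real k powr \<epsilon> / (\<epsilon> * ln 2)) + \<bar>log 2 c\<bar>"
        by linarith
      thus ?thesis unfolding hk using xpos by (intro mult_left_mono) auto
    qed
    also have "\<dots> = A * real k powr (- s) + B * (real k powr (- s) * real k powr \<epsilon>)"
      by (simp add: A_def B_def algebra_simps)
    also have "real k powr (- s) * real k powr \<epsilon> = real k powr (\<epsilon> - s)"
      using kp by (simp add: powr_add[symmetric])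
    finally have "hh (zipf_p \<beta> k) \<le> g k" by (simp add: g_def)
    moreover have "hh (zipf_p \<beta> k) \<ge> 0" by (intro hh_nonneg zp_nonneg zp_le1)
    ultimately show "norm (hh (zipf_p \<beta> k)) \<le> g k" by simp
  qed
qed

lemma HS_zipf: "\<exists>h. HS (zipf_pmf \<beta>) h"
proof -
  have "(\<lambda>k. hh (zipf_p \<beta> k)) summable_on UNIV"
    using hh_zp_summable
    by (subst summable_on_UNIV_nonneg_real_iff) (auto intro!: hh_nonneg zp_nonneg zp_le1)
  thus ?thesis unfolding HS_def pmf_zipf summable_on_def by blast
qed

end


lemma has_sum_prob: "((\<lambda>x. pmf p x * indicator A x) has_sum measure_pmf.prob p A) UNIV"
proof -
  have s: "pmf p summable_on A"
    using pmf_abs_summable[of p A] abs_summable_equivalent summable_on_iff_abs_summable_on_real by blast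
  have "infsum (pmf p) A = measure_pmf.prob p A"
    using infsetsum_infsum[OF pmf_abs_summable, of p A] measure_pmf_conv_infsetsum[of p A] by simp
  hence "(pmf p has_sum measure_pmf.prob p A) A" using s has_sum_infsum by metis
  hence "((\<lambda>x. pmf p x * indicator A x) has_sum measure_pmf.prob p A) A"
    by (rule has_sum_cong[THEN iffD1, rotated]) auto
  thus ?thesis by (rule has_sum_cong_neutral[THEN iffD1, rotated -1]) auto
qed

lemma prob_notin:
  fixes p :: "nat pmf"
  shows "measure_pmf.prob (replicate_pmf n p) {ks. k \<notin> set ks} = (1 - pmf p k) ^ n"
proof (induction n)
  case 0 thus ?case by simp
next
  case (Suc n)
  have r: "replicate_pmf (Suc n) p = map_pmf (\<lambda>(x, xs). x # xs) (pair_pmf p (replicate_pmf n p))"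
    by (simp add: pair_pmf_def map_bind_pmf map_pmf_def bind_assoc_pmf bind_return_pmf)
  have "(\<lambda>(x, xs). x # xs) -` {ks. k \<notin> set ks} = {x. x \<noteq> k} \<times> {xs. k \<notin> set xs}"
    by auto
  hence "measure_pmf.prob (replicate_pmf (Suc n) p) {ks. k \<notin> set ks} =
      measure_pmf.prob (pair_pmf p (replicate_pmf n p)) ({x. x \<noteq> k} \<times> {xs. k \<notin> set xs})"
    unfolding r by simp
  also have "\<dots> = measure_pmf.prob p {x. x \<noteq> k} * (1 - pmf p k) ^ n"
    by (subst measure_pmf_prob_product) (auto simp: Suc)
  also have "measure_pmf.prob p {x. x \<noteq> k} = 1 - pmf p k"
  proof -
    have "{x. x \<noteq> k} = space (measure_pmf p) - {k}" by auto
    moreover have "measure_pmf.prob p (space (measure_pmf p) - {k}) = 1 - measure_pmf.prob p {k}"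
      by (rule measure_pmf.prob_compl) simp
    ultimately show ?thesis by (simp add: measure_pmf_single)
  qed
  finally show ?case by simp
qed

lemma prob_in:
  fixes p :: "nat pmf"
  shows "measure_pmf.prob (replicate_pmf n p) {ks. k \<in> set ks} = 1 - (1 - pmf p k) ^ n"
proof -
  have "{ks. k \<in> set ks} = space (measure_pmf (replicate_pmf n p)) - {ks. k \<notin> set ks}" by auto
  moreover have "measure_pmf.prob (replicate_pmf n p) (space (measure_pmf (replicate_pmf n p)) - {ks. k \<notin> set ks}) = 1 - measure_pmf.prob (replicate_pmf n p) {ks. k \<notin> set ks}"
    by (rule measure_pmf.prob_compl) simp
  ultimately show ?thesis by (simp add: prob_notin)
qed

context
  fixes \<beta> :: real
  assumes b0: "0 < \<beta>" and b1: "\<beta> < 1"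
begin

lemma q_le: "1 - (1 - zipf_p \<beta> k) ^ n \<le> real n * zipf_p \<beta> k"
  using Bernoulli_inequality[of "- zipf_p \<beta> k" n] zp_le1[OF b0 b1, of k] by simp

lemma q_nonneg: "0 \<le> 1 - (1 - zipf_p \<beta> k) ^ n"
proof -
  have "(1 - zipf_p \<beta> k) ^ n \<le> 1"
    using zp_nonneg[OF b0 b1, of k] zp_le1[OF b0 b1, of k] by (intro power_le_one) auto
  thus ?thesis by simp
qed

lemma U_sums: "(\<lambda>k. 1 - (1 - zipf_p \<beta> (Suc k)) ^ n) sums U \<beta> n"
proof -
  have "summable (\<lambda>k. 1 - (1 - zipf_p \<beta> (Suc k)) ^ n)"
  proof (rule summable_comparison_test'[of "\<lambda>k. real n * zipf_p \<beta> (Suc k)" 0])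
    show "summable (\<lambda>k. real n * zipf_p \<beta> (Suc k))"
      using zp_summable[OF b0 b1] by (intro summable_mult) (simp add: summable_Suc_iff)
  qed (use q_le q_nonneg in auto)
  thus ?thesis unfolding U_def by (rule summable_sums)
qed

lemma q_has_sum: "((\<lambda>k. 1 - (1 - zipf_p \<beta> k) ^ n) has_sum U \<beta> n) UNIV"
proof -
  have "(\<lambda>k. 1 - (1 - zipf_p \<beta> k) ^ n) sums (U \<beta> n + (1 - (1 - zipf_p \<beta> 0) ^ n))"
    using U_sums sums_Suc_iff[of "\<lambda>k. 1 - (1 - zipf_p \<beta> k) ^ n"] by blast
  hence "(\<lambda>k. 1 - (1 - zipf_p \<beta> k) ^ n) sums U \<beta> n" by (simp add: zipf_p_def)
  thus ?thesis by (rule sums_nonneg_imp_has_sum) (rule q_nonneg)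
qed

lemma E_distinct:
  "((\<lambda>ks. pmf (replicate_pmf n (zipf_pmf \<beta>)) ks * real (card (set ks))) has_sum U \<beta> n) UNIV"
proof -
  let ?R = "replicate_pmf n (zipf_pmf \<beta>)"
  define F where "F = (\<lambda>(k::nat, ks::nat list). pmf ?R ks * indicator {ks. k \<in> set ks} ks)"
  have fib: "((\<lambda>ks. F (k, ks)) has_sum (1 - (1 - zipf_p \<beta> k) ^ n)) UNIV" for k
    using has_sum_prob[of ?R "{ks. k \<in> set ks}"] prob_in[of n "zipf_pmf \<beta>" k]
    by (simp add: F_def pmf_zipf[OF b0 b1])
  have nn: "F x \<ge> 0" for x by (auto simp: F_def split: prod.splits)
  have "F summable_on Sigma UNIV (\<lambda>_. UNIV)"
    by (rule summable_on_SigmaI[OF fib has_sum_imp_summable[OF q_has_sum]]) (use nn in auto)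
  hence "(F has_sum U \<beta> n) (UNIV \<times> UNIV)"
    by (intro has_sum_SigmaI[OF fib q_has_sum])
  hence sw: "((\<lambda>(ks, k). F (k, ks)) has_sum U \<beta> n) (Sigma UNIV (\<lambda>_. UNIV))"
    by (subst (asm) has_sum_swap) simp
  have fib2: "((\<lambda>k. (\<lambda>(ks, k). F (k, ks)) (ks, k)) has_sum (pmf ?R ks * real (card (set ks)))) UNIV" for ks
  proof -
    have "((\<lambda>k. F (k, ks)) has_sum (\<Sum>k\<in>set ks. F (k, ks))) (set ks)"
      by (intro has_sum_finiteI) auto
    hence "((\<lambda>k. F (k, ks)) has_sum (\<Sum>k\<in>set ks. F (k, ks))) UNIV"
      by (rule has_sum_cong_neutral[THEN iffD1, rotated -1]) (auto simp: F_def)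
    moreover have "(\<Sum>k\<in>set ks. F (k, ks)) = pmf ?R ks * real (card (set ks))"
      by (simp add: F_def)
    ultimately show ?thesis by simp
  qed
  show ?thesis by (rule has_sum_SigmaD[OF sw fib2])
qed

lemma MI_exact: "mutual_info (XY_pmf \<beta> n m) = U \<beta> n + U \<beta> m - U \<beta> (n + m)"
proof -
  obtain h where "HS (zipf_pmf \<beta>) h" using HS_zipf[OF b0 b1] by blast
  thus ?thesis by (rule MI_formula) (rule E_distinct)
qed

end


lemma pow_diff_le:
  fixes a b :: real
  assumes "0 \<le> b" "b \<le> a"
  shows "a ^ Suc n - b ^ Suc n \<le> real (Suc n) * (a - b) * a ^ n"
proof (induction n)
  case 0 thus ?case by simp
next
  case (Suc n)
  have "a ^ Suc (Suc n) - b ^ Suc (Suc n) = a * (a ^ Suc n - b ^ Suc n) + b ^ Suc n * (a - b)"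
    by (simp add: algebra_simps)
  also have "\<dots> \<le> a * (real (Suc n) * (a - b) * a ^ n) + a ^ Suc n * (a - b)"
    using assms Suc by (intro add_mono mult_left_mono mult_right_mono power_mono) auto
  also have "\<dots> = real (Suc (Suc n)) * (a - b) * a ^ Suc n" by (simp add: algebra_simps)
  finally show ?case .
qed

lemma exp_neg_le: "0 \<le> (p::real) \<Longrightarrow> exp (- p) \<le> 1 - p + p\<^sup>2"
proof -
  assume p: "0 \<le> p"
  have "1 + p \<le> exp p" using exp_ge_add_one_self[of p] by simp
  hence "exp (- p) \<le> 1 / (1 + p)" using p by (simp add: exp_minus field_simps)
  also have "\<dots> \<le> 1 - p + p\<^sup>2"
    using p by (simp add: field_simps power2_eq_square)
  finally show ?thesis .
qed

lemma term_bounds: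
  fixes p :: real
  assumes p0: "0 \<le> p" and p1: "p \<le> 1"
  shows "(1 - p) ^ n \<le> exp (- real n * p)" and "exp (- real n * p) - (1 - p) ^ n \<le> p"
proof -
  have ab: "1 - p \<le> exp (- p)" using exp_ge_add_one_self[of "-p"] by simp
  have e: "exp (- real n * p) = exp (- p) ^ n" by (simp add: exp_of_nat_mult[symmetric])
  show "(1 - p) ^ n \<le> exp (- real n * p)" unfolding e using ab p1 by (intro power_mono) auto
  show "exp (- real n * p) - (1 - p) ^ n \<le> p"
  proof (cases n)
    case 0 thus ?thesis using p0 by simp
  next
    case (Suc m)
    have "exp (- real n * p) - (1 - p) ^ n \<le> real (Suc m) * (exp (- p) - (1 - p)) * exp (- p) ^ m"
      unfolding e unfolding Suc using ab p1 by (intro pow_diff_le) auto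
    also have "\<dots> \<le> real (Suc m) * p\<^sup>2 * exp (- p) ^ m"
      using exp_neg_le[OF p0] by (intro mult_right_mono mult_left_mono) auto
    also have "exp (- p) ^ m = exp (- (real m * p))" by (simp add: exp_of_nat_mult[symmetric])
    also have "real (Suc m) * p\<^sup>2 * exp (- (real m * p)) \<le> p"
    proof -
      have "real (Suc m) * p \<le> 1 + real m * p" using p1 by (simp add: algebra_simps)
      also have "\<dots> \<le> exp (real m * p)" using exp_ge_add_one_self[of "real m * p"] by simp
      finally have "real (Suc m) * p * exp (- (real m * p)) \<le> 1"
        by (simp add: exp_minus field_simps)
      hence "p * (real (Suc m) * p * exp (- (real m * p))) \<le> p * 1"
        using p0 by (intro mult_left_mono) auto
      thus ?thesis by (simp add: power2_eq_square algebra_simps)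
    qed
    finally show ?thesis .
  qed
qed

context
  fixes \<beta> :: real
  assumes b0: "0 < \<beta>" and b1: "\<beta> < 1"
begin

definition phi :: "real \<Rightarrow> real" where
  "phi x = (\<Sum>k. 1 - exp (- x * zipf_p \<beta> (Suc k)))"

lemma zp_Suc_summable: "summable (\<lambda>k. zipf_p \<beta> (Suc k))"
  using zp_summable[OF b0 b1] by (simp add: summable_Suc_iff)

lemma zp_Suc_sums: "(\<lambda>k. zipf_p \<beta> (Suc k)) sums 1"
proof -
  have "zipf_p \<beta> 0 = 0" by (simp add: zipf_p_def)
  thus ?thesis using zp_sums[OF b0 b1] sums_Suc_iff[of "zipf_p \<beta>" 1] by simp
qed

lemma phi_term_nonneg: "0 \<le> x \<Longrightarrow> 0 \<le> 1 - exp (- x * zipf_p \<beta> k)"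
  using zp_nonneg[OF b0 b1, of k] by (simp add: mult_nonneg_nonneg)

lemma phi_term_le: "1 - exp (- x * zipf_p \<beta> k) \<le> x * zipf_p \<beta> k"
  using exp_ge_add_one_self[of "- x * zipf_p \<beta> k"] by simp

lemma phi_summable: "0 \<le> x \<Longrightarrow> summable (\<lambda>k. 1 - exp (- x * zipf_p \<beta> (Suc k)))"
  by (rule summable_comparison_test'[of "\<lambda>k. x * zipf_p \<beta> (Suc k)" 0])
     (use zp_Suc_summable phi_term_nonneg phi_term_le in \<open>auto intro: summable_mult\<close>)

lemma phi_nonneg: "0 \<le> x \<Longrightarrow> 0 \<le> phi x"
  unfolding phi_def by (intro suminf_nonneg phi_summable phi_term_nonneg)

lemma phi_mono: "0 \<le> x \<Longrightarrow> x \<le> y \<Longrightarrow> phi x \<le> phi y"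
  unfolding phi_def
proof (intro suminf_le phi_summable)
  fix k assume "0 \<le> x" "x \<le> y"
  thus "1 - exp (- x * zipf_p \<beta> (Suc k)) \<le> 1 - exp (- y * zipf_p \<beta> (Suc k))"
    using zp_nonneg[OF b0 b1, of "Suc k"] by (simp add: mult_right_mono)
qed auto

lemma U_phi: "0 \<le> U \<beta> n - phi (real n)" "U \<beta> n - phi (real n) \<le> 1"
proof -
  let ?d = "\<lambda>k. exp (- real n * zipf_p \<beta> (Suc k)) - (1 - zipf_p \<beta> (Suc k)) ^ n"
  have "(\<lambda>k. (1 - (1 - zipf_p \<beta> (Suc k)) ^ n) - (1 - exp (- real n * zipf_p \<beta> (Suc k)))) sums (U \<beta> n - phi (real n))"
    unfolding phi_def by (intro sums_diff U_sums[OF b0 b1] summable_sums phi_summable) auto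
  hence ds: "?d sums (U \<beta> n - phi (real n))" by simp
  have tb: "(1 - zipf_p \<beta> (Suc k)) ^ n \<le> exp (- real n * zipf_p \<beta> (Suc k))"
          "exp (- real n * zipf_p \<beta> (Suc k)) - (1 - zipf_p \<beta> (Suc k)) ^ n \<le> zipf_p \<beta> (Suc k)" for k
    using term_bounds[OF zp_nonneg[OF b0 b1, of "Suc k"] zp_le1[OF b0 b1, of "Suc k"], where n=n] by auto
  show "0 \<le> U \<beta> n - phi (real n)"
    using sums_le[of "\<lambda>_. 0" ?d 0 "U \<beta> n - phi (real n)"] ds tb(1) by simp
  show "U \<beta> n - phi (real n) \<le> 1"
    using sums_le[OF _ ds zp_Suc_sums] tb(2) by simp
qed

end


context
  fixes \<beta> :: real
  assumes b0: "0 < \<beta>" and b1: "\<beta> < 1"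
begin

definition gg :: "real \<Rightarrow> real \<Rightarrow> real" where
  "gg x t = 1 - exp (- x * zipf_const \<beta> * t powr (- 1 / \<beta>))"

lemma gg_mono: "0 \<le> x \<Longrightarrow> 0 < t1 \<Longrightarrow> t1 \<le> t2 \<Longrightarrow> gg x t2 \<le> gg x t1"
  unfolding gg_def
proof -
  assume x: "0 \<le> x" and t: "0 < t1" "t1 \<le> t2"
  have "t2 powr (- 1 / \<beta>) \<le> t1 powr (- 1 / \<beta>)"
    using t b0 by (intro powr_mono2') (auto simp: divide_nonpos_pos)
  hence "x * zipf_const \<beta> * t2 powr (- 1 / \<beta>) \<le> x * zipf_const \<beta> * t1 powr (- 1 / \<beta>)"
    using x zc_pos[OF b0 b1] by (intro mult_left_mono) auto
  thus "1 - exp (- x * zipf_const \<beta> * t2 powr (- 1 / \<beta>)) \<le> 1 - exp (- x * zipf_const \<beta> * t1 powr (- 1 / \<beta>))"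
    by simp
qed

lemma gg_le1: "gg x t \<le> 1" unfolding gg_def by simp

lemma phi_gg: "phi \<beta> x = (\<Sum>k. gg x (real (Suc k)))"
  unfolding phi_def[OF b0 b1] gg_def zp_Suc[OF b0 b1] by (simp add: algebra_simps)

lemma phi_gg_sums: "0 \<le> x \<Longrightarrow> (\<lambda>k. gg x (real (Suc k))) sums phi \<beta> x"
  unfolding phi_gg using phi_summable[OF b0 b1, of x]
  unfolding zp_Suc[OF b0 b1] gg_def by (simp add: algebra_simps summable_sums)

lemma phi_scaled_sums:
  assumes x: "0 \<le> x" and L: "L > 0"
  shows "(\<lambda>j. gg x (real (Suc j) / real L)) sums phi \<beta> (real L powr (1 / \<beta>) * x)"
proof -
  have xx: "0 \<le> real L powr (1 / \<beta>) * x" using x by simp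
  have "(real (Suc j) / real L) powr (- 1 / \<beta>) = real L powr (1 / \<beta>) * real (Suc j) powr (- 1 / \<beta>)" for j
    using L by (simp add: powr_divide powr_minus divide_simps)
  hence "gg x (real (Suc j) / real L) = gg (real L powr (1 / \<beta>) * x) (real (Suc j))" for j
    unfolding gg_def by (simp add: algebra_simps)
  thus ?thesis using phi_gg_sums[OF xx] by simp
qed

lemma phi_scale:
  assumes x: "0 \<le> x" and L: "L > 0"
  shows "real L * phi \<beta> x \<le> phi \<beta> (real L powr (1 / \<beta>) * x)"
    and "phi \<beta> (real L powr (1 / \<beta>) * x) \<le> real L * phi \<beta> x + real L"
proof -
  let ?f = "\<lambda>j. gg x (real (Suc j) / real L)"
  have gs: "(\<lambda>n. sum ?f {n * L..<n * L + L}) sums phi \<beta> (real L powr (1 / \<beta>) * x)"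
    by (rule sums_group[OF phi_scaled_sums[OF x L] L])
  have blk: "real L * gg x (real (Suc n)) \<le> sum ?f {n * L..<n * L + L}"
    "sum ?f {n * L..<n * L + L} \<le> real L * (if n = 0 then 1 else gg x (real n))" for n
  proof -
    have lo: "gg x (real (Suc n)) \<le> ?f j" and hi: "?f j \<le> (if n = 0 then 1 else gg x (real n))"
      if j: "j \<in> {n * L..<n * L + L}" for j
    proof -
      have "n * L < Suc j" using j by simp
      hence "real (n * L) < real (Suc j)" by (simp only: of_nat_less_iff)
      hence a: "real n < real (Suc j) / real L" using L by (simp add: field_simps)
      have "Suc j \<le> n * L + L" using j by simp
      hence "real (Suc j) \<le> real (n * L + L)" by (simp only: of_nat_le_iff)
      hence b: "real (Suc j) / real L \<le> real (Suc n)" using L by (simp add: field_simps)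
      have pos: "0 < real (Suc j) / real L" using L by simp
      show "gg x (real (Suc n)) \<le> ?f j" by (rule gg_mono[OF x pos b])
      show "?f j \<le> (if n = 0 then 1 else gg x (real n))"
        using gg_mono[OF x _ less_imp_le[OF a]] gg_le1 by auto
    qed
    have "sum (\<lambda>_. gg x (real (Suc n))) {n * L..<n * L + L} \<le> sum ?f {n * L..<n * L + L}"
      by (rule sum_mono[OF lo])
    thus "real L * gg x (real (Suc n)) \<le> sum ?f {n * L..<n * L + L}" by simp
    have "sum ?f {n * L..<n * L + L} \<le> sum (\<lambda>_. (if n = 0 then 1 else gg x (real n))) {n * L..<n * L + L}"
      by (rule sum_mono[OF hi])
    thus "sum ?f {n * L..<n * L + L} \<le> real L * (if n = 0 then 1 else gg x (real n))" by simp
  qed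
  have lows: "(\<lambda>n. real L * gg x (real (Suc n))) sums (real L * phi \<beta> x)"
    by (intro sums_mult phi_gg_sums x)
  show "real L * phi \<beta> x \<le> phi \<beta> (real L powr (1 / \<beta>) * x)"
    by (rule sums_le[OF blk(1) lows gs])
  have "(\<lambda>n. real L * (if n = 0 then 1 else gg x (real n))) sums (real L * phi \<beta> x + real L * 1)"
    using lows sums_Suc_iff[of "\<lambda>n. real L * (if n = 0 then 1 else gg x (real n))"] by simp
  thus "phi \<beta> (real L powr (1 / \<beta>) * x) \<le> real L * phi \<beta> x + real L"
    using sums_le[OF blk(2) gs] by simp
qed

end


context
  fixes \<beta> C :: real
  assumes b0: "0 < \<beta>" and b1: "\<beta> < 1" and C0: "C > 0"
    and hyp: "(\<lambda>n. U \<beta> n) \<sim>[at_top] (\<lambda>n. C * real n powr \<beta>)"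
begin

lemma lim_U: "(\<lambda>n. U \<beta> n / real n powr \<beta>) \<longlonglongrightarrow> C"
proof -
  have ev: "eventually (\<lambda>n. U \<beta> n \<noteq> 0 \<or> C * real n powr \<beta> \<noteq> 0) at_top"
    using eventually_ge_at_top[of "1::nat"] by eventually_elim (use C0 in auto)
  have "(\<lambda>n. U \<beta> n / (C * real n powr \<beta>)) \<longlonglongrightarrow> 1"
    by (rule asymp_equivD_strong[OF hyp ev])
  hence "(\<lambda>n. C * (U \<beta> n / (C * real n powr \<beta>))) \<longlonglongrightarrow> C * 1"
    by (intro tendsto_mult tendsto_const)
  moreover have "eventually (\<lambda>n. C * (U \<beta> n / (C * real n powr \<beta>)) = U \<beta> n / real n powr \<beta>) at_top"
    using C0 by (intro always_eventually) auto
  ultimately show ?thesis by (simp add: tendsto_cong)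
qed

lemma lim_phi_nat: "(\<lambda>n. phi \<beta> (real n) / real n powr \<beta>) \<longlonglongrightarrow> C"
proof -
  have z: "(\<lambda>n. (U \<beta> n - phi \<beta> (real n)) / real n powr \<beta>) \<longlonglongrightarrow> 0"
  proof (rule Lim_null_comparison)
    show "(\<lambda>n::nat. 1 / real n powr \<beta>) \<longlonglongrightarrow> 0" using b0 by real_asymp
    show "\<forall>\<^sub>F n in sequentially. norm ((U \<beta> n - phi \<beta> (real n)) / real n powr \<beta>) \<le> 1 / real n powr \<beta>"
      using U_phi[OF b0 b1] by (intro always_eventually allI) (simp add: abs_of_nonneg divide_right_mono)
  qed
  have "(\<lambda>n. U \<beta> n / real n powr \<beta> - (U \<beta> n - phi \<beta> (real n)) / real n powr \<beta>) \<longlonglongrightarrow> C - 0"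
    by (intro tendsto_diff lim_U z)
  thus ?thesis by (simp add: diff_divide_distrib)
qed

lemma lim_phi_real: "((\<lambda>y. phi \<beta> y / y powr \<beta>) \<longlongrightarrow> C) at_top"
proof -
  define a where "a = (\<lambda>n::nat. phi \<beta> (real n) / real n powr \<beta> * (real n / (real n + 1)) powr \<beta>)"
  define b where "b = (\<lambda>n::nat. phi \<beta> (real (Suc n)) / real (Suc n) powr \<beta> * (real (Suc n) / real n) powr \<beta>)"
  have la: "a \<longlonglongrightarrow> C * 1" unfolding a_def
    by (intro tendsto_mult lim_phi_nat) (use b0 in real_asymp)
  have lb: "b \<longlonglongrightarrow> C * 1" unfolding b_def
  proof (intro tendsto_mult)
    show "(\<lambda>n. phi \<beta> (real (Suc n)) / real (Suc n) powr \<beta>) \<longlonglongrightarrow> C"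
      using lim_phi_nat by (rule LIMSEQ_Suc)
  qed (use b0 in real_asymp)
  have fl: "filterlim (\<lambda>y::real. nat \<lfloor>y\<rfloor>) at_top at_top"
    by (rule filterlim_compose[OF filterlim_nat_sequentially filterlim_floor_sequentially])
  have la': "((\<lambda>y::real. a (nat \<lfloor>y\<rfloor>)) \<longlongrightarrow> C) at_top"
    using filterlim_compose[OF la fl] by simp
  have lb': "((\<lambda>y::real. b (nat \<lfloor>y\<rfloor>)) \<longlongrightarrow> C) at_top"
    using filterlim_compose[OF lb fl] by simp
  have bounds: "a (nat \<lfloor>y\<rfloor>) \<le> phi \<beta> y / y powr \<beta> \<and> phi \<beta> y / y powr \<beta> \<le> b (nat \<lfloor>y\<rfloor>)"
    if y: "y \<ge> 1" for y
  proof -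
    define n where "n = nat \<lfloor>y\<rfloor>"
    have n1: "n \<ge> 1" using y by (simp add: n_def le_nat_iff)
    have ny: "real n \<le> y" using y by (simp add: n_def)
    have yn: "y \<le> real n + 1" using y by (simp add: n_def)
    have np: "real n > 0" using n1 by simp
    have yp: "y > 0" using y by simp
    have pn: "0 \<le> phi \<beta> (real n)" by (rule phi_nonneg[OF b0 b1]) simp
    have py: "phi \<beta> (real n) \<le> phi \<beta> y" by (rule phi_mono[OF b0 b1]) (use ny in auto)
    have py2: "phi \<beta> y \<le> phi \<beta> (real n + 1)" by (rule phi_mono[OF b0 b1]) (use yn yp in auto)
    have ea: "a n = phi \<beta> (real n) / (real n + 1) powr \<beta>"
      unfolding a_def using np by (simp add: powr_divide)
    have eb: "b n = phi \<beta> (real n + 1) / real n powr \<beta>"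
      unfolding b_def using np by (simp add: powr_divide add.commute)
    have "phi \<beta> (real n) / (real n + 1) powr \<beta> \<le> phi \<beta> y / y powr \<beta>"
      using py pn yp yn b0 by (intro frac_le) (auto intro: powr_mono2)
    moreover have "phi \<beta> y / y powr \<beta> \<le> phi \<beta> (real n + 1) / real n powr \<beta>"
      using py2 py pn yp ny np b0 by (intro frac_le) (auto intro: powr_mono2)
    ultimately show ?thesis using ea eb n_def by simp
  qed
  show ?thesis
  proof (rule tendsto_sandwich[OF _ _ la' lb'])
    show "\<forall>\<^sub>F y in at_top. a (nat \<lfloor>y\<rfloor>) \<le> phi \<beta> y / y powr \<beta>"
      using eventually_ge_at_top[of "1::real"] by eventually_elim (use bounds in auto)
    show "\<forall>\<^sub>F y in at_top. phi \<beta> y / y powr \<beta> \<le> b (nat \<lfloor>y\<rfloor>)"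
      using eventually_ge_at_top[of "1::real"] by eventually_elim (use bounds in auto)
  qed
qed

lemma phi_vs_C:
  assumes x: "x > 0"
  shows "phi \<beta> x \<le> C * x powr \<beta>" "C * x powr \<beta> \<le> phi \<beta> x + 1"
proof -
  define y where "y = (\<lambda>L::nat. real L powr (1 / \<beta>) * x)"
  have fy: "filterlim y at_top sequentially" unfolding y_def using b0 x by real_asymp
  have l1: "(\<lambda>L. phi \<beta> (y L) / y L powr \<beta>) \<longlonglongrightarrow> C"
    using filterlim_compose[OF lim_phi_real fy] by simp
  have "(\<lambda>L. phi \<beta> (y L) / y L powr \<beta> * x powr \<beta>) \<longlonglongrightarrow> C * x powr \<beta>"
    by (intro tendsto_mult l1 tendsto_const)
  moreover have "eventually (\<lambda>L. phi \<beta> (y L) / y L powr \<beta> * x powr \<beta> = phi \<beta> (y L) / real L) sequentially"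
    using eventually_ge_at_top[of "1::nat"]
  proof eventually_elim
    case (elim L)
    have "y L powr \<beta> = real L * x powr \<beta>"
      unfolding y_def using x b0 elim by (simp add: powr_mult powr_powr)
    thus ?case using x elim by simp
  qed
  ultimately have l2: "(\<lambda>L. phi \<beta> (y L) / real L) \<longlonglongrightarrow> C * x powr \<beta>"
    by (simp add: tendsto_cong)
  have bnd: "eventually (\<lambda>L. phi \<beta> x \<le> phi \<beta> (y L) / real L \<and> phi \<beta> (y L) / real L \<le> phi \<beta> x + 1) sequentially"
    using eventually_ge_at_top[of "1::nat"]
  proof eventually_elim
    case (elim L)
    hence L: "L > 0" by simp
    have s1: "real L * phi \<beta> x \<le> phi \<beta> (y L)" "phi \<beta> (y L) \<le> real L * phi \<beta> x + real L"
      unfolding y_def using phi_scale[OF b0 b1 less_imp_le[OF x] L] by auto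
    have Lp: "real L > 0" using L by simp
    show ?case using s1 Lp by (simp add: field_simps)
  qed
  show "phi \<beta> x \<le> C * x powr \<beta>"
    by (rule tendsto_le[OF trivial_limit_sequentially l2 tendsto_const])
       (use bnd in \<open>auto elim: eventually_mono\<close>)
  show "C * x powr \<beta> \<le> phi \<beta> x + 1"
    by (rule tendsto_le[OF trivial_limit_sequentially tendsto_const l2])
       (use bnd in \<open>auto elim: eventually_mono\<close>)
qed

lemma U_C_bound: "\<bar>U \<beta> n - C * real n powr \<beta>\<bar> \<le> 1"
proof (cases "n = 0")
  case True thus ?thesis by (simp add: U_def)
next
  case False
  hence x: "real n > 0" by simp
  show ?thesis using phi_vs_C[OF x] U_phi[OF b0 b1, of n] by linarith
qed

end


lemma bern_powr:
  fixes \<beta> t :: real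
  assumes "0 < \<beta>" "\<beta> < 1" "0 \<le> t"
  shows "(1 + t) powr \<beta> \<le> 1 + \<beta> * t"
  using Youngs_inequality_0[of \<beta> "1 - \<beta>" "1 + t" 1] assms by (simp add: algebra_simps)

lemma G_lower_aux:
  fixes \<beta> a b :: real
  assumes b: "0 < \<beta>" "\<beta> < 1" and ab: "0 < a" "a \<le> b"
  shows "(1 - \<beta>) * a powr \<beta> \<le> a powr \<beta> + b powr \<beta> - (a + b) powr \<beta>"
proof -
  have bp: "b > 0" using ab by simp
  have e: "a + b = b * (1 + a / b)" using bp by (simp add: field_simps)
  have "(a + b) powr \<beta> = b powr \<beta> * (1 + a / b) powr \<beta>"
    using bp ab by (subst e) (rule powr_mult; auto)
  also have "\<dots> \<le> b powr \<beta> * (1 + \<beta> * (a / b))"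
    using b ab bp by (intro mult_left_mono bern_powr) auto
  also have "\<dots> = b powr \<beta> + \<beta> * (a * (b powr \<beta> / b))" by (simp add: algebra_simps)
  also have "b powr \<beta> / b = b powr (\<beta> - 1)" using bp by (simp add: powr_diff)
  also have "a * b powr (\<beta> - 1) \<le> a * a powr (\<beta> - 1)"
    using ab b by (intro mult_left_mono powr_mono2') auto
  also have "a * a powr (\<beta> - 1) = a powr \<beta>" using ab by (simp add: powr_diff)
  finally have "(a + b) powr \<beta> \<le> b powr \<beta> + \<beta> * a powr \<beta>"
    using b by (simp add: mult_left_mono)
  thus ?thesis by (simp add: algebra_simps)
qed

lemma G_lower:
  fixes \<beta> :: real and n m :: nat
  assumes b: "0 < \<beta>" "\<beta> < 1" and nm: "n \<ge> 1" "m \<ge> 1"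
  shows "(1 - \<beta>) * real (min n m) powr \<beta> \<le> real n powr \<beta> + real m powr \<beta> - real (n + m) powr \<beta>"
proof (cases "n \<le> m")
  case True thus ?thesis using G_lower_aux[OF b, of "real n" "real m"] nm by (simp add: min_def)
next
  case False thus ?thesis using G_lower_aux[OF b, of "real m" "real n"] nm by (simp add: min_def algebra_simps)
qed

theorem mainTheorem9:
  fixes \<beta> C :: real
  assumes "0 < \<beta>" and "\<beta> < 1"
    and "C > 0"
    and "(\<lambda>n. U \<beta> n) \<sim>[at_top] (\<lambda>n. C * real n powr \<beta>)"
  shows "(\<lambda>(n, m). mutual_info (XY_pmf \<beta> n m))
           \<sim>[at_top \<times>\<^sub>F at_top]
         (\<lambda>(n, m). C * (real n powr \<beta> + real m powr \<beta> - real (n + m) powr \<beta>))"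
proof -
  note b0 = assms(1) and b1 = assms(2) and C0 = assms(3) and hyp = assms(4)
  define G where "G = (\<lambda>(n::nat, m::nat). real n powr \<beta> + real m powr \<beta> - real (n + m) powr \<beta>)"
  define F where "F = (\<lambda>(n::nat, m::nat). mutual_info (XY_pmf \<beta> n m))"
  define K where "K = 3 / (C * (1 - \<beta>))"
  have K0: "K > 0" using C0 b1 by (simp add: K_def)
  have Fe: "F (n, m) = C * G (n, m) + ((U \<beta> n - C * real n powr \<beta>) + (U \<beta> m - C * real m powr \<beta>)
                 - (U \<beta> (n + m) - C * real (n + m) powr \<beta>))" for n m
    unfolding F_def G_def by (simp add: MI_exact[OF b0 b1] algebra_simps)
  have eb: "\<bar>F (n, m) - C * G (n, m)\<bar> \<le> 3" for n m
    using U_C_bound[OF b0 b1 C0 hyp, of n] U_C_bound[OF b0 b1 C0 hyp, of m]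
      U_C_bound[OF b0 b1 C0 hyp, of "n + m"] unfolding Fe by linarith
  have ev1: "eventually (\<lambda>x. fst x \<ge> 1 \<and> snd x \<ge> 1) ((at_top :: nat filter) \<times>\<^sub>F (at_top :: nat filter))"
    unfolding eventually_prod_sequentially by (rule exI[of _ 1]) auto
  have flmin: "filterlim (\<lambda>x. min (fst x) (snd x)) at_top ((at_top :: nat filter) \<times>\<^sub>F (at_top :: nat filter))"
    unfolding filterlim_at_top
  proof
    fix Z :: nat
    show "eventually (\<lambda>x. Z \<le> min (fst x) (snd x)) (at_top \<times>\<^sub>F at_top)"
      unfolding eventually_prod_sequentially by (rule exI[of _ Z]) auto
  qed
  have hk: "(\<lambda>k::nat. K / real k powr \<beta>) \<longlonglongrightarrow> 0" using b0 by real_asymp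
  have hk': "((\<lambda>x. K / real (min (fst x) (snd x)) powr \<beta>) \<longlongrightarrow> 0) ((at_top :: nat filter) \<times>\<^sub>F (at_top :: nat filter))"
    using filterlim_compose[OF hk flmin] by simp
  have z: "((\<lambda>x. (F x - C * G x) / (C * G x)) \<longlongrightarrow> 0) (at_top \<times>\<^sub>F at_top)"
  proof (rule Lim_null_comparison[OF _ hk'])
    show "eventually (\<lambda>x. norm ((F x - C * G x) / (C * G x)) \<le> K / real (min (fst x) (snd x)) powr \<beta>) (at_top \<times>\<^sub>F at_top)"
      using ev1
    proof eventually_elim
      case (elim x)
      obtain n m where x: "x = (n, m)" by (cases x)
      have n1: "n \<ge> 1" "m \<ge> 1" using elim x by auto
      have mp: "real (min n m) powr \<beta> > 0" using n1 by simp
      have gl: "(1 - \<beta>) * real (min n m) powr \<beta> \<le> G (n, m)"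
        using G_lower[OF b0 b1 n1] by (simp add: G_def)
      have gp: "C * G (n, m) \<ge> C * ((1 - \<beta>) * real (min n m) powr \<beta>)"
        using gl C0 by simp
      have lp: "C * ((1 - \<beta>) * real (min n m) powr \<beta>) > 0" using C0 b1 mp by simp
      have "norm ((F x - C * G x) / (C * G x)) = \<bar>F (n, m) - C * G (n, m)\<bar> / (C * G (n, m))"
        using gp lp by (simp add: x abs_divide)
      also have "\<dots> \<le> 3 / (C * ((1 - \<beta>) * real (min n m) powr \<beta>))"
        using eb[of n m] gp lp by (intro frac_le) auto
      also have "\<dots> = K / real (min (fst x) (snd x)) powr \<beta>"
        by (simp add: K_def x)
      finally show ?case .
    qed
  qed
  have "((\<lambda>x. 1 + (F x - C * G x) / (C * G x)) \<longlongrightarrow> 1 + 0) (at_top \<times>\<^sub>F at_top)"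
    by (intro tendsto_add tendsto_const z)
  moreover have "eventually (\<lambda>x. 1 + (F x - C * G x) / (C * G x) = F x / (C * G x)) ((at_top :: nat filter) \<times>\<^sub>F (at_top :: nat filter))"
    using ev1
  proof eventually_elim
    case (elim x)
    obtain n m where x: "x = (n, m)" by (cases x)
    have n1: "n \<ge> 1" "m \<ge> 1" using elim x by auto
    have mp: "real (min n m) powr \<beta> > 0" using n1 by simp
    have "(1 - \<beta>) * real (min n m) powr \<beta> \<le> G (n, m)"
      using G_lower[OF b0 b1 n1] by (simp add: G_def)
    moreover have "(1 - \<beta>) * real (min n m) powr \<beta> > 0" using b1 mp by simp
    ultimately have "C * G x \<noteq> 0" using C0 x by auto
    thus ?case by (simp add: field_simps)
  qed
  ultimately have "((\<lambda>x. F x / (C * G x)) \<longlongrightarrow> 1) (at_top \<times>\<^sub>F at_top)"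
    by (simp add: tendsto_cong)
  hence "F \<sim>[at_top \<times>\<^sub>F at_top] (\<lambda>x. C * G x)" by (rule asymp_equivI')
  moreover have "(\<lambda>x. C * G x) = (\<lambda>(n, m). C * (real n powr \<beta> + real m powr \<beta> - real (n + m) powr \<beta>))"
    by (auto simp: G_def)
  ultimately show ?thesis by (simp add: F_def)
qed


end
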